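(* Let $A$ be a ribbon Littlewood–Richardson tableau of shape $\alpha=(\alpha_1,\dots,\alpha_m)$, and let $i\in\{1,\dots,m-1\}$ with $\alpha_i>\alpha_{i+1}$. Let $A_{(i\ i+1)}$ be the ribbon tableau of shape $\alpha_{(i\ i+1)}$ obtained from $A$ by applying the $R$-matrix algorithm to rows $i$ and $i+1$ (all other rows unchanged). Then $A_{(i\ i+1)}$ is a Yamanouchi tableau.
   Context: Ribbons: a composition $\alpha=(\alpha_1,\dots,\alpha_m)$ (each $\alpha_i\ge 2$) determines the ribbon skew shape with $m$ rows whose $i$-th row from the top has $\alpha_i$ boxes, where the leftmost box of row $i$ lies directly above the rightmost box of row $i+1$ and no other columns are shared. For $\pi\in S_m$, $\alpha_\pi=(\alpha_{\pi^{-1}(1)},\dots,\alpha_{\pi^{-1}(m)})$; so $\alpha_{(i\ i+1)}$ is $\alpha$ with the $i$-th and $(i+1)$-st entries swapped. A ribbon tableau is a filling of the boxes with positive integers. It is semistandard if entries weakly increase left to right along rows and strictly increase down columns (for a ribbon: each row is weakly increasing, and the rightmost entry of row $i+1$ is strictly greater than the leftmost entry of row $i$). The reverse reading word (RRW) reads each row right to left, rows taken top to bottom. A word is Yamanouchi if every prefix contains at least as many $k$'s as $(k+1)$'s for every $k\ge1$; a tableau is Yamanouchi if its RRW is. A Littlewood–Richardson (LR) tableau is one that is both semistandard and Yamanouchi; its content is $\mu=(\mu_1,\mu_2,\dots)$ with $\mu_k$ the number of entries equal to $k$. $R$-matrix algorithm on rows $i,i+1$ with $\alpha_i>\alpha_{i+1}$: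 form a left multiset $L$ = entries of row $i$ and a right multiset $R$ = entries of row $i+1$. Process each element $b$ of $R$ (in any order; the result is independent of the order): match $b$ to a not-yet-matched element of $L$ that is strictly less than $b$ and as large as possible among such; if no unmatched element of $L$ is less than $b$, match $b$ to a largest unmatched element of $L$. After all of $R$ is processed, exactly $\alpha_{i+1}$ elements of $L$ are matched and $\alpha_i-\alpha_{i+1}$ are unmatched. The new row $i$ consists of the matched elements of $L$ in weakly increasing order (length $\alpha_{i+1}$), and the new row $i+1$ consists of all elements of $R$ together with the unmatched elements of $L$ in weakly increasing order (length $\alpha_i$). Example: rows $1,3,3,4,7$ over $1,3,5$ become $1,4,7$ over $1,3,3,3,5$. This preserves the total content of the two rows and weak increase within each row. *)

theory Defs
  imports "HOL-Library.Multiset"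
begin

text \<open>A ribbon tableau is represented as the list of its rows, top row first
(row k of the paper is list index k-1); each row is the list of its entries
from left to right.\<close>

type_synonym ribbon_tableau = "nat list list"

definition shape :: "ribbon_tableau \<Rightarrow> nat list" where
  "shape T = map length T"

definition is_ribbon_shape :: "nat list \<Rightarrow> bool" where
  "is_ribbon_shape \<alpha> \<longleftrightarrow> (\<forall>a \<in> set \<alpha>. 2 \<le> a)"

definition positive_entries :: "ribbon_tableau \<Rightarrow> bool" where
  "positive_entries T \<longleftrightarrow> (\<forall>r \<in> set T. \<forall>x \<in> set r. 0 < x)"

text \<open>Semistandard ribbon tableau: rows weakly increase, and the rightmost entry
of row k+1 is strictly greater than the leftmost entry of row k (the column they share).\<close>
definition semistandard :: "ribbon_tableau \<Rightarrow> bool" where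
  "semistandard T \<longleftrightarrow>
     (\<forall>r \<in> set T. sorted r) \<and>
     (\<forall>k. Suc k < length T \<longrightarrow> hd (T ! k) < last (T ! Suc k))"

definition rrw :: "ribbon_tableau \<Rightarrow> nat list" where
  "rrw T = concat (map rev T)"

definition yamanouchi_word :: "nat list \<Rightarrow> bool" where
  "yamanouchi_word w \<longleftrightarrow>
     (\<forall>p k. 1 \<le> k \<longrightarrow> count (mset (take p w)) (Suc k) \<le> count (mset (take p w)) k)"

definition yamanouchi :: "ribbon_tableau \<Rightarrow> bool" where
  "yamanouchi T \<longleftrightarrow> yamanouchi_word (rrw T)"

definition LR_ribbon_tableau :: "ribbon_tableau \<Rightarrow> bool" where
  "LR_ribbon_tableau T \<longleftrightarrow>
     is_ribbon_shape (shape T) \<and> positive_entries T \<and> semistandard T \<and> yamanouchi T"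

text \<open>One step of the R-matrix matching: the state is (unmatched part of L,
matched part of L).\<close>
definition rmatch_step :: "nat \<Rightarrow> nat multiset \<times> nat multiset \<Rightarrow> nat multiset \<times> nat multiset" where
  "rmatch_step b st =
     (let U = fst st; M = snd st;
          c = (if \<exists>x \<in># U. x < b then Max {x \<in> set_mset U. x < b} else Max (set_mset U))
      in (U - {#c#}, M + {#c#}))"

text \<open>R-matrix algorithm on a top row (L) and bottom row (R), processing the elements
of R in the order given by the list bs (a rearrangement of R).
Returns (new top row, new bottom row).\<close>
definition rmatrix_rows :: "nat list \<Rightarrow> nat list \<Rightarrow> nat list \<Rightarrow> nat list \<times> nat list" where
  "rmatrix_rows bs toprow botrow =
     (let st = fold rmatch_step bs (mset toprow, {#})
      in (sorted_list_of_multiset (snd st), sorted_list_of_multiset (mset botrow + fst st)))"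

text \<open>A_(i i+1) for 0-based row index i (rows i and i+1 of the list = rows i+1, i+2 of the paper).\<close>
definition rmatrix_swap :: "nat list \<Rightarrow> nat \<Rightarrow> ribbon_tableau \<Rightarrow> ribbon_tableau" where
  "rmatrix_swap bs i T =
     (let (t', b') = rmatrix_rows bs (T ! i) (T ! Suc i) in T[i := t', Suc i := b'])"

end

theory Submission
  imports Defs
begin

lemma sorted_split_filter:
  fixes s :: "nat list"
  shows "sorted s \<Longrightarrow> s = filter (\<lambda>x. x \<le> k) s @ filter (\<lambda>x. \<not> x \<le> k) s"
proof (induction s)
  case Nil then show ?case by simp
next
  case (Cons x s)
  show ?case
  proof (cases "x \<le> k")
    case True then show ?thesis using Cons by simp
  next
    case False
    with Cons.prems have h: "\<forall>y\<in>set s. \<not> y \<le> k" by auto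
    then have "filter (\<lambda>x. x \<le> k) s = []" "filter (\<lambda>x. \<not> x \<le> k) s = s"
      by (auto simp: filter_empty_conv)
    with False show ?thesis by simp
  qed
qed

lemma count_take_le: "count (mset (take j xs)) x \<le> count (mset xs) x"
proof -
  have "count (mset xs) x = count (mset (take j xs)) x + count (mset (drop j xs)) x"
    by (metis append_take_drop_id count_union mset_append)
  then show ?thesis by simp
qed

lemma blockY:
  fixes s :: "nat list"
  assumes "sorted s" "a + count (mset s) (Suc k) \<le> b"
  shows "a + count (mset (take j (rev s))) (Suc k) \<le> b + count (mset (take j (rev s))) k"
proof -
  define G where "G = rev (filter (\<lambda>x. \<not> x \<le> k) s)"
  define H where "H = rev (filter (\<lambda>x. x \<le> k) s)"
  have rs: "rev s = G @ H" using sorted_split_filter[OF assms(1), of k] unfolding G_def H_def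
    by (metis rev_append)
  have G0: "count (mset G) k = 0" unfolding G_def by (simp add: mset_filter)
  have GS: "count (mset G) (Suc k) = count (mset s) (Suc k)" unfolding G_def by (simp add: mset_filter)
  have H0: "count (mset H) (Suc k) = 0" unfolding H_def by (simp add: mset_filter)
  show ?thesis
  proof (cases "j \<le> length G")
    case True
    then have "take j (rev s) = take j G" using rs by simp
    moreover have "count (mset (take j G)) (Suc k) \<le> count (mset G) (Suc k)" by (rule count_take_le)
    ultimately show ?thesis using assms(2) GS by simp
  next
    case False
    then have "take j (rev s) = G @ take (j - length G) H" using rs by simp
    moreover have "count (mset (take (j - length G) H)) (Suc k) = 0"
      using count_take_le[of "j - length G" H "Suc k"] H0 by simp
    moreover have "count (mset (take j (rev s))) (Suc k) = count (mset G) (Suc k) + count (mset (take (j - length G) H)) (Suc k)"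
      using calculation(1) by simp
    ultimately show ?thesis using assms(2) GS by linarith
  qed
qed

lemma blockY_ex:
  fixes s :: "nat list"
  assumes "sorted s"
  shows "\<exists>j\<le>length s. count (mset (take j (rev s))) (Suc k) = count (mset s) (Suc k)
           \<and> count (mset (take j (rev s))) k = 0"
proof -
  define G where "G = rev (filter (\<lambda>x. \<not> x \<le> k) s)"
  define H where "H = rev (filter (\<lambda>x. x \<le> k) s)"
  have rs: "rev s = G @ H" using sorted_split_filter[OF assms(1), of k] unfolding G_def H_def
    by (metis rev_append)
  have G0: "count (mset G) k = 0" unfolding G_def by (simp add: mset_filter)
  have GS: "count (mset G) (Suc k) = count (mset s) (Suc k)" unfolding G_def by (simp add: mset_filter)
  have "take (length G) (rev s) = G" using rs by simp
  moreover have "length G \<le> length s" using rs by (metis le_add1 length_append length_rev)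
  ultimately show ?thesis using G0 GS by metis
qed

lemma rmatch_step_eq:
  assumes "U \<noteq> {#}"
  shows "\<exists>c. c \<in># U \<and> rmatch_step b (U, M) = (U - {#c#}, M + {#c#})
     \<and> ((\<exists>x\<in>#U. x < b) \<longrightarrow> c = Max {x \<in> set_mset U. x < b})"
proof (cases "\<exists>x\<in>#U. x < b")
  case True
  have "Max {x \<in> set_mset U. x < b} \<in> {x \<in> set_mset U. x < b}"
    using True by (intro Max_in) auto
  then show ?thesis using True unfolding rmatch_step_def Let_def by auto
next
  case False
  have "Max (set_mset U) \<in> set_mset U" using assms by (intro Max_in) auto
  then show ?thesis using False unfolding rmatch_step_def Let_def by auto
qed

lemma fold_rmatch:
  "length bs < size U \<Longrightarrow> fold rmatch_step bs (U, M) = (U', M') \<Longrightarrow>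
    U' + M' = U + M \<and> U' \<subseteq># U \<and> (0 < count U' k \<longrightarrow> count M k + count (mset bs) (Suc k) \<le> count M' k)"
proof (induction bs arbitrary: U M)
  case Nil then show ?case by simp
next
  case (Cons b bs)
  have "U \<noteq> {#}" using Cons.prems by auto
  then obtain c where c: "c \<in># U" and st: "rmatch_step b (U, M) = (U - {#c#}, M + {#c#})"
      and cmax: "(\<exists>x\<in>#U. x < b) \<longrightarrow> c = Max {x \<in> set_mset U. x < b}"
    using rmatch_step_eq by blast
  have len: "length bs < size (U - {#c#})" using Cons.prems(1) c by (simp add: size_Diff_singleton)
  have f: "fold rmatch_step bs (U - {#c#}, M + {#c#}) = (U', M')" using Cons.prems(2) st by simp
  note IH = Cons.IH[OF len f]
  have e: "(U - {#c#}) + (M + {#c#}) = U + M" using c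
    by (metis add.assoc add.commute add_mset_add_single insert_DiffM)
  have 1: "U' + M' = U + M" using IH e by simp
  have 2: "U' \<subseteq># U" using IH by (meson diff_subset_eq_self subset_mset.order_trans)
  have 3: "count M k + count (mset (b # bs)) (Suc k) \<le> count M' k" if pos: "0 < count U' k"
  proof -
    have ih: "count (M + {#c#}) k + count (mset bs) (Suc k) \<le> count M' k" using IH pos by blast
    have "U' \<subseteq># U - {#c#}" using IH by blast
    then have "count U' k \<le> count (U - {#c#}) k" by (rule mset_subset_eq_count)
    with pos have kin: "k \<in># U - {#c#}" by (simp add: count_greater_zero_iff[symmetric] del: count_greater_zero_iff)
    then have kU: "k \<in># U" by (meson in_diffD)
    show ?thesis
    proof (cases "b = Suc k")
      case True
      have "c = Max {x \<in> set_mset U. x < b}" using cmax kU True by auto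
      also have "\<dots> = k" using kU True by (intro Max_eqI) auto
      finally show ?thesis using ih True by simp
    next
      case False
      then show ?thesis using ih by (simp split: if_splits)
    qed
  qed
  show ?case using 1 2 3 by blast
qed

theorem lemma3p1:
  fixes A :: ribbon_tableau and i :: nat and bs :: "nat list"
  assumes "LR_ribbon_tableau A"
    and "Suc i < length A"
    and "length (A ! Suc i) < length (A ! i)"
    and "mset bs = mset (A ! Suc i)"
  shows "yamanouchi (rmatrix_swap bs i A)"
proof -
  define L where "L = A!i"
  define R where "R = A!Suc i"
  obtain P S where A: "A = P @ L # R # S" and lenP: "length P = i"
  proof -
    have "A = take i A @ drop i A" by simp
    also have "drop i A = A!i # drop (Suc i) A" using assms(2) by (simp add: Cons_nth_drop_Suc)
    also have "drop (Suc i) A = A!Suc i # drop (Suc (Suc i)) A" using assms(2) by (simp add: Cons_nth_drop_Suc)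
    finally show ?thesis using that[of "take i A" "drop (Suc (Suc i)) A"] assms(2) L_def R_def by simp
  qed
  have sortedL: "sorted L" and sortedR: "sorted R"
    using assms(1) unfolding LR_ribbon_tableau_def semistandard_def A by auto
  define st where "st = fold rmatch_step bs (mset L, {#})"
  define U where "U = fst st"
  define M where "M = snd st"
  define t' where "t' = sorted_list_of_multiset M"
  define b' where "b' = sorted_list_of_multiset (mset R + U)"
  have lenbs: "length bs < size (mset L)"
    using assms(3,4) L_def R_def by (metis size_mset)
  have stp: "fold rmatch_step bs (mset L, {#}) = (U, M)" unfolding U_def M_def st_def by simp
  have FR: "\<And>k. U + M = mset L \<and> U \<subseteq># mset L \<and> (0 < count U k \<longrightarrow> count {#} k + count (mset bs) (Suc k) \<le> count M k)"
    using fold_rmatch[OF lenbs stp] by simp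
  have swap: "rmatrix_swap bs i A = P @ t' # b' # S"
  proof -
    have "rmatrix_swap bs i A = A[i := t', Suc i := b']"
      unfolding rmatrix_swap_def rmatrix_rows_def t'_def b'_def M_def U_def st_def L_def R_def
      by (simp add: Let_def)
    also have "\<dots> = P @ t' # b' # S" unfolding A using lenP by (simp add: list_update_append)
    finally show ?thesis .
  qed
  define WP where "WP = rrw P"
  define WS where "WS = rrw S"
  have rrwA: "rrw A = WP @ rev L @ rev R @ WS" unfolding A WP_def WS_def rrw_def by simp
  have rrwN: "rrw (rmatrix_swap bs i A) = WP @ rev t' @ rev b' @ WS"
    unfolding swap WP_def WS_def rrw_def by simp
  have H: "\<And>p k. 1 \<le> k \<Longrightarrow> count (mset (take p (WP @ rev L @ rev R @ WS))) (Suc k)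
                  \<le> count (mset (take p (WP @ rev L @ rev R @ WS))) k"
    using assms(1) unfolding LR_ribbon_tableau_def yamanouchi_def yamanouchi_word_def rrwA by blast
  have mt: "mset t' = M" and st': "sorted t'" unfolding t'_def by auto
  have mb: "mset b' = mset R + U" and sb: "sorted b'" unfolding b'_def by auto
  show ?thesis
    unfolding yamanouchi_def yamanouchi_word_def rrwN
  proof (intro allI impI)
    fix p k :: nat
    assume k: "1 \<le> k"
    let ?c = "\<lambda>u x. count (mset u) x"
    obtain j1 where j1: "j1 \<le> length L" "?c (take j1 (rev L)) (Suc k) = ?c L (Suc k)"
      "?c (take j1 (rev L)) k = 0" using blockY_ex[OF sortedL, of k] by blast
    have "take (length WP + j1) (WP @ rev L @ rev R @ WS) = WP @ take j1 (rev L)"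
      using j1(1) by simp
    then have cond1: "?c WP (Suc k) + ?c L (Suc k) \<le> ?c WP k"
      using H[OF k, of "length WP + j1"] j1 by simp
    obtain j2 where j2: "j2 \<le> length R" "?c (take j2 (rev R)) (Suc k) = ?c R (Suc k)"
      "?c (take j2 (rev R)) k = 0" using blockY_ex[OF sortedR, of k] by blast
    have "take (length WP + length L + j2) (WP @ rev L @ rev R @ WS) = WP @ rev L @ take j2 (rev R)"
      using j2(1) by simp
    then have cond2: "?c WP (Suc k) + ?c L (Suc k) + ?c R (Suc k) \<le> ?c WP k + ?c L k"
      using H[OF k, of "length WP + length L + j2"] j2 by simp
    have UM: "\<And>x. count U x + count M x = ?c L x" using FR by (metis count_union)
    have Mk: "0 < count U k \<Longrightarrow> ?c R (Suc k) \<le> count M k" using FR[of k] assms(4) R_def by simp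
    have new1: "?c WP (Suc k) + ?c t' (Suc k) \<le> ?c WP k"
      using cond1 UM[of "Suc k"] mt by simp
    have new2: "(?c WP (Suc k) + ?c t' (Suc k)) + ?c b' (Suc k) \<le> ?c WP k + ?c t' k"
    proof (cases "count U k = 0")
      case True
      then show ?thesis using cond2 UM[of k] UM[of "Suc k"] mt mb by simp
    next
      case False
      then show ?thesis using cond1 Mk UM[of k] UM[of "Suc k"] mt mb by simp
    qed
    let ?w = "WP @ rev t' @ rev b' @ WS"
    show "?c (take p ?w) (Suc k) \<le> ?c (take p ?w) k"
    proof (cases "p \<le> length WP")
      case True
      then have "take p ?w = take p (WP @ rev L @ rev R @ WS)" by simp
      then show ?thesis using H[OF k, of p] by simp
    next
      case p1: False
      define q where "q = p - length WP"
      show ?thesis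
      proof (cases "q \<le> length t'")
        case True
        then have "take p ?w = WP @ take q (rev t')" using p1 q_def by simp
        then show ?thesis using blockY[OF st' new1, of q] by simp
      next
        case q1: False
        define r where "r = q - length t'"
        show ?thesis
        proof (cases "r \<le> length b'")
          case True
          then have "take p ?w = WP @ rev t' @ take r (rev b')" using p1 q1 q_def r_def by simp
          then show ?thesis using blockY[OF sb new2, of r] by simp
        next
          case r1: False
          define z where "z = r - length b'"
          have tw: "take p ?w = WP @ rev t' @ rev b' @ take z WS" using p1 q1 r1 q_def r_def z_def by simp
          have "take (length WP + length L + length R + z) (WP @ rev L @ rev R @ WS)
                 = WP @ rev L @ rev R @ take z WS" by simp
          moreover have "mset (rev t') + mset (rev b') = mset (rev L) + mset (rev R)"
            using mt mb FR by (simp add: ac_simps)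
          then have e: "\<And>x. ?c t' x + ?c b' x = ?c L x + ?c R x"
            by (metis count_union mset_rev)
          have "?c (take p ?w) (Suc k) = ?c WP (Suc k) + (?c L (Suc k) + ?c R (Suc k)) + ?c (take z WS) (Suc k)"
            using tw e[of "Suc k"] by simp
          moreover have "?c (take p ?w) k = ?c WP k + (?c L k + ?c R k) + ?c (take z WS) k"
            using tw e[of k] by simp
          ultimately show ?thesis using H[OF k, of "length WP + length L + length R + z"]
            by simp
        qed
      qed
    qed
  qed
qed

end
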